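(* Let $X$ be a Banach space as described in the context and let $f\in X$. If there exists a sequence $p_n\in\mathcal{P}_n[\mathbb{Z}]$ with $\lim_{n\to\infty}\|f-p_n\|=0$, then all Taylor coefficients $c_k=\frac{f^{(k)}(0)}{k!}$ of $f$ are integers.
   Context: $\mathbb{D}=\{z\in\mathbb{C}:|z|<1\}$. $X$ is a complex Banach space of functions analytic in $\mathbb{D}$ whose norm $\|\cdot\|$ satisfies: (i) $\|f(\cdot\, e^{it})\|=\|f(\cdot)\|$ for all $t\in\mathbb{R}$ and $f\in X$; (ii) $\|f\|<\infty$ for every entire function $f$; (iii) for all $f\in X$ and $g\in L[0,2\pi]$, $\big\|\frac{1}{2\pi}\int_0^{2\pi} f(ze^{it})g(t)\,dt\big\|\le \frac{1}{2\pi}\int_0^{2\pi}|g(t)|\,dt\cdot\|f\|$. A complex number is called an integer if its real and imaginary parts are integers; $\mathcal{P}_n[\mathbb{Z}]$ is the set of complex polynomials of degree at most $n-1$ with integer coefficients in this sense. *)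

theory Defs
  imports "HOL-Analysis.Analysis" "HOL-Computational_Algebra.Polynomial"
begin

text \<open>Functions on the unit disc are represented as total functions complex => complex
  that vanish outside the disc (a canonical representative).\<close>

definition restrD :: "(complex \<Rightarrow> complex) \<Rightarrow> complex \<Rightarrow> complex" where
  "restrD f = (\<lambda>z. if z \<in> ball 0 1 then f z else 0)"

definition disc_banach_space :: "(complex \<Rightarrow> complex) set \<Rightarrow> ((complex \<Rightarrow> complex) \<Rightarrow> real) \<Rightarrow> bool" where
  "disc_banach_space X N \<longleftrightarrow>
     (\<forall>f\<in>X. f analytic_on ball 0 1 \<and> (\<forall>z. z \<notin> ball 0 1 \<longrightarrow> f z = 0)) \<and>
     (\<lambda>z. 0) \<in> X \<and>
     (\<forall>f\<in>X. \<forall>g\<in>X. (\<lambda>z. f z + g z) \<in> X) \<and>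
     (\<forall>c. \<forall>f\<in>X. (\<lambda>z. c * f z) \<in> X) \<and>
     (\<forall>f\<in>X. 0 \<le> N f) \<and>
     (\<forall>f\<in>X. N f = 0 \<longleftrightarrow> f = (\<lambda>z. 0)) \<and>
     (\<forall>c. \<forall>f\<in>X. N (\<lambda>z. c * f z) = norm c * N f) \<and>
     (\<forall>f\<in>X. \<forall>g\<in>X. N (\<lambda>z. f z + g z) \<le> N f + N g) \<and>
     (\<forall>s. (\<forall>n. s n \<in> X) \<longrightarrow>
          (\<forall>e>0. \<exists>M. \<forall>m\<ge>M. \<forall>n\<ge>M. N (\<lambda>z. s m z - s n z) < e) \<longrightarrow>
          (\<exists>f\<in>X. (\<lambda>n. N (\<lambda>z. s n z - f z)) \<longlonglongrightarrow> 0))"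

definition rot_invariant :: "(complex \<Rightarrow> complex) set \<Rightarrow> ((complex \<Rightarrow> complex) \<Rightarrow> real) \<Rightarrow> bool" where
  "rot_invariant X N \<longleftrightarrow>
     (\<forall>f\<in>X. \<forall>t::real. (\<lambda>z. f (z * cis t)) \<in> X \<and> N (\<lambda>z. f (z * cis t)) = N f)"

definition contains_entire :: "(complex \<Rightarrow> complex) set \<Rightarrow> bool" where
  "contains_entire X \<longleftrightarrow> (\<forall>f. f holomorphic_on UNIV \<longrightarrow> restrD f \<in> X)"

definition conv_bounded :: "(complex \<Rightarrow> complex) set \<Rightarrow> ((complex \<Rightarrow> complex) \<Rightarrow> real) \<Rightarrow> bool" where
  "conv_bounded X N \<longleftrightarrow>
     (\<forall>f\<in>X. \<forall>g :: real \<Rightarrow> complex. set_integrable lborel {0..2*pi} g \<longrightarrow>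
        (let h = restrD (\<lambda>z. (1 / (2*pi)) * (LINT t:{0..2*pi}|lborel. f (z * cis t) * g t))
         in h \<in> X \<and> N h \<le> (1 / (2*pi)) * (LINT t:{0..2*pi}|lborel. norm (g t)) * N f))"

definition gauss_int :: "complex \<Rightarrow> bool" where
  "gauss_int c \<longleftrightarrow> Re c \<in> \<int> \<and> Im c \<in> \<int>"

end

theory Submission
  imports Defs "HOL-Complex_Analysis.Complex_Analysis"
begin

lemma circ_shift:
  fixes z :: complex assumes "z \<noteq> 0"
  obtains a where "a \<in> {0..1}" "shiftpath a (circlepath 0 (norm z)) = (\<lambda>s. z * exp (2 * of_real pi * \<i> * of_real s))"
proof -
  define a where "a = (if Arg z \<ge> 0 then Arg z / (2*pi) else Arg z / (2*pi) + 1)"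
  have a01: "a \<in> {0..1}" using Arg_bounded[of z] pi_gt_zero by (auto simp: a_def field_simps)
  have ea: "exp (2 * of_real pi * \<i> * of_real a) = exp (\<i> * Arg z)"
  proof (cases "Arg z \<ge> 0")
    case True then show ?thesis by (simp add: a_def field_simps)
  next
    case False
    have "2 * of_real pi * \<i> * of_real a = \<i> * Arg z + 2 * of_real pi * \<i>"
      using False pi_gt_zero by (simp add: a_def distrib_left)
    then have "exp (2 * of_real pi * \<i> * of_real a) = exp (\<i> * Arg z + 2 * of_real pi * \<i>)"
      by simp
    also have "\<dots> = exp (\<i> * Arg z)" by (simp add: exp_add)
    finally show ?thesis .
  qed
  have per: "exp (2 * of_real pi * \<i> * of_real (y - 1)) = exp (2 * of_real pi * \<i> * of_real y)" for y::real
  proof -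
    have "2 * of_real pi * \<i> * of_real (y - 1) = 2 * of_real pi * \<i> * of_real y - 2 * of_real pi * \<i>"
      by (simp add: algebra_simps)
    then show ?thesis by (simp add: exp_diff)
  qed
  have "shiftpath a (circlepath 0 (norm z)) = (\<lambda>s. z * exp (2 * of_real pi * \<i> * of_real s))"
  proof
    fix s
    have e: "exp (2 * of_real pi * \<i> * of_real (a + s)) = exp (\<i> * Arg z) * exp (2 * of_real pi * \<i> * of_real s)"
    proof -
      have "2 * of_real pi * \<i> * of_real (a + s) = 2 * of_real pi * \<i> * of_real a + 2 * of_real pi * \<i> * of_real s"
        by (simp add: distrib_left)
      then show ?thesis using ea by (simp only: exp_add)
    qed
    show "shiftpath a (circlepath 0 (norm z)) s = z * exp (2 * of_real pi * \<i> * of_real s)"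
    proof -
      have "shiftpath a (circlepath 0 (norm z)) s = norm z * exp (2 * of_real pi * \<i> * of_real (a + s))"
        unfolding shiftpath_def circlepath using per[of "a+s"] by simp
      also have "\<dots> = (norm z * exp (\<i> * Arg z)) * exp (2 * of_real pi * \<i> * of_real s)"
        by (subst e) (simp only: mult.assoc)
      also have "\<dots> = z * exp (2 * of_real pi * \<i> * of_real s)"
        using Arg_eq[OF assms] by simp
      finally show ?thesis .
    qed
  qed
  then show ?thesis using a01 that by blast
qed

lemma alg: fixes z w g c :: complex assumes "z \<noteq> 0" "w \<noteq> 0"
  shows "g / (z*w)^Suc k * (z*c*w) = c / z^k * (g * inverse (w^k))"
proof -
  have "(z*w)^Suc k = z^k * w^k * (z*w)" by (simp add: power_mult_distrib algebra_simps)
  then show ?thesis using assms by (simp add: divide_simps)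
qed

lemma img01: "(\<lambda>x. x / (2*pi)) ` {0..2*pi} = {0..1::real}"
proof -
  have "x \<in> (\<lambda>x. x / (2*pi)) ` {0..2*pi}" if "x \<in> {0..1}" for x
    using that pi_gt_zero by (intro image_eqI[of _ _ "x * (2*pi)"]) auto
  then show ?thesis using pi_gt_zero by (auto simp: field_simps)
qed

lemma gamma_vd: "((\<lambda>s. z * exp (2 * of_real pi * \<i> * of_real s)) has_vector_derivative
   (z * (2 * of_real pi * \<i>) * exp (2 * of_real pi * \<i> * of_real s))) (at s)"
proof -
  have "((\<lambda>w. z * exp (2 * of_real pi * \<i> * w)) has_field_derivative
     (z * (2 * of_real pi * \<i>) * exp (2 * of_real pi * \<i> * of_real s))) (at (of_real s))"
    by (auto intro!: derivative_eq_intros)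
  from has_vector_derivative_real_field[OF this] show ?thesis by simp
qed

lemma coef_hasint:
  fixes G :: "complex \<Rightarrow> complex"
  assumes hol: "G holomorphic_on ball 0 1" and z: "norm z < 1" "z \<noteq> 0"
  shows "((\<lambda>t. G (z * cis t) * cis (- (real k * t))) has_integral
            (2 * pi * ((deriv ^^ k) G 0 / fact k) * z ^ k)) {0..2*pi}"
proof -
  define r where "r = norm z"
  have r: "0 < r" "r < 1" using z by (auto simp: r_def)
  define D where "D = (deriv ^^ k) G 0"
  define H where "H = (\<lambda>t. G (z * cis t) * cis (- (real k * t)))"
  have cb: "cball 0 r \<subseteq> ball (0::complex) 1" using r by auto
  have bb: "ball 0 r \<subseteq> ball (0::complex) 1" using r by (simp add: subset_ball)
  have C: "((\<lambda>u. G u / (u - 0) ^ Suc k) has_contour_integral (2 * pi * \<i> / fact k * D)) (circlepath 0 r)"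
    unfolding D_def
    by (rule Cauchy_has_contour_integral_higher_derivative_circlepath[OF
        holomorphic_on_imp_continuous_on[OF holomorphic_on_subset[OF hol cb]] holomorphic_on_subset[OF hol bb]])
       (use r in simp)
  obtain a where a: "a \<in> {0..1}"
    "shiftpath a (circlepath 0 (norm z)) = (\<lambda>s. z * exp (2 * of_real pi * \<i> * of_real s))"
    using circ_shift[OF z(2)] by blast
  have "((\<lambda>u. G u / (u - 0) ^ Suc k) has_contour_integral (2 * pi * \<i> / fact k * D))
          (\<lambda>s. z * exp (2 * of_real pi * \<i> * of_real s))"
    using has_contour_integral_shiftpath[OF C _ a(1)] a(2) by (simp add: r_def)
  then have I1: "((\<lambda>s. G (z * exp (2 * of_real pi * \<i> * of_real s)) / (z * exp (2 * of_real pi * \<i> * of_real s)) ^ Suc k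
         * (z * (2 * of_real pi * \<i>) * exp (2 * of_real pi * \<i> * of_real s))) has_integral (2 * pi * \<i> / fact k * D)) {0..1}"
    unfolding has_contour_integral using vector_derivative_at[OF gamma_vd] by simp
  have eq: "G (z * exp (2 * of_real pi * \<i> * of_real s)) / (z * exp (2 * of_real pi * \<i> * of_real s)) ^ Suc k
         * (z * (2 * of_real pi * \<i>) * exp (2 * of_real pi * \<i> * of_real s)) = (2 * of_real pi * \<i> / z ^ k) * H (2 * pi * s)" for s
  proof -
    have e: "exp (2 * of_real pi * \<i> * of_real s) = cis (2 * pi * s)"
      by (simp add: cis_conv_exp algebra_simps)
    have c: "cis (- (real k * (2 * pi * s))) = inverse (cis (2 * pi * s) ^ k)"
      unfolding Complex.DeMoivre cis_inverse by (simp add: mult.commute)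
    show ?thesis unfolding H_def e c by (rule alg[OF z(2) cis_neq_zero])
  qed
  have I2: "((\<lambda>s. (2 * of_real pi * \<i> / z ^ k) * H (2 * pi * s)) has_integral (2 * pi * \<i> / fact k * D)) {0..1}"
    using I1 unfolding eq .
  have I3: "((\<lambda>s. H (2 * pi * s)) has_integral (z ^ k / (2 * pi * \<i>)) * (2 * pi * \<i> / fact k * D)) {0..1}"
    using has_integral_mult_right[OF I2, of "z ^ k / (2 * pi * \<i>)"] z(2)
    by (simp add: field_simps)
  have "(H has_integral (\<bar>2*pi\<bar> *\<^sub>R ((z ^ k / (2 * pi * \<i>)) * (2 * pi * \<i> / fact k * D)))) {0..2*pi}"
    using has_integral_stretch_real_iff[of "2*pi" H _ 0 "2*pi"] I3 img01 by simp
  then show ?thesis unfolding H_def D_def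
    by (simp add: field_simps scaleR_conv_of_real)
qed

lemma poly_coeff_deriv: "coeff (p::complex poly) k = (deriv ^^ k) (poly p) 0 / fact k"
proof -
  have e: "eval_fps (fps_of_poly p) = poly p" by (rule ext) simp
  show ?thesis using fps_nth_conv_deriv[of "fps_of_poly p" k] by (simp add: e)
qed

lemma cont_int:
  fixes G :: "complex \<Rightarrow> complex"
  assumes hol: "G holomorphic_on ball 0 1" and z: "norm z < 1"
  shows "continuous_on {0..2*pi} (\<lambda>t. G (z * cis t) * cis (- (real k * t)))"
proof -
  have c1: "continuous_on {0..2*pi} (\<lambda>t. z * cis t)" unfolding cis_conv_exp
    by (intro continuous_intros)
  have c2: "continuous_on {0..2*pi} (\<lambda>t. cis (- (real k * t)))" unfolding cis_conv_exp
    by (intro continuous_intros)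
  have "continuous_on {0..2*pi} (\<lambda>t. G (z * cis t))"
    by (rule continuous_on_compose2[OF holomorphic_on_imp_continuous_on[OF hol] c1])
       (use z in \<open>auto simp: norm_mult\<close>)
  then show ?thesis using c2 by (intro continuous_intros)
qed

lemma coef_lint:
  fixes G :: "complex \<Rightarrow> complex"
  assumes hol: "G holomorphic_on ball 0 1" and z: "norm z < 1" "z \<noteq> 0"
  shows "(LINT t:{0..2*pi}|lborel. G (z * cis t) * cis (- (real k * t))) =
            2 * pi * ((deriv ^^ k) G 0 / fact k) * z ^ k"
proof -
  have si: "set_integrable lborel {0..2*pi} (\<lambda>t. G (z * cis t) * cis (- (real k * t)))"
    by (rule borel_integrable_atLeastAtMost'[OF cont_int[OF hol z(1)]])
  show ?thesis
    using set_borel_integral_eq_integral(2)[OF si] integral_unique[OF coef_hasint[OF hol z]]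
    by simp
qed

lemma lint_norm_cis: "(LINT t:{0..2*pi}|lborel. norm (cis (- (real k * t)))) = 2 * pi"
proof -
  have si: "set_integrable lborel {0..2*pi} (\<lambda>t::real. 1::real)"
    by (rule borel_integrable_atLeastAtMost') simp
  have "(LINT t:{0..2*pi}|lborel. norm (cis (- (real k * t)))) = (LINT t:{0..2*pi}|lborel. (1::real))"
    by simp
  also have "\<dots> = integral {0..2*pi} (\<lambda>t. 1::real)"
    by (rule set_borel_integral_eq_integral(2)[OF si])
  also have "\<dots> = 2 * pi" using pi_gt_zero by simp
  finally show ?thesis .
qed

theorem theorem5p2:
  fixes X :: "(complex \<Rightarrow> complex) set" and N :: "(complex \<Rightarrow> complex) \<Rightarrow> real"
    and f :: "complex \<Rightarrow> complex" and p :: "nat \<Rightarrow> complex poly"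
  assumes "disc_banach_space X N" and "rot_invariant X N" and "contains_entire X"
    and "conv_bounded X N"
    and "f \<in> X"
    and "\<forall>n. p n = 0 \<or> degree (p n) < n"
    and "\<forall>n i. gauss_int (coeff (p n) i)"
    and "(\<lambda>n. N (\<lambda>z. f z - restrD (poly (p n)) z)) \<longlonglongrightarrow> 0"
  shows "\<forall>k. gauss_int ((deriv ^^ k) f 0 / fact k)"
proof
  fix k
  note B = assms(1)[unfolded disc_banach_space_def]
  have fhol: "f holomorphic_on ball 0 1" using B assms(5) analytic_imp_holomorphic by blast
  define c where "c = (deriv ^^ k) f 0 / fact k"
  define u where "u = restrD (\<lambda>z. z ^ k)"
  have "(\<lambda>z::complex. z ^ k) holomorphic_on UNIV" by (intro holomorphic_intros)
  then have uX: "u \<in> X" using assms(3) unfolding contains_entire_def u_def by blast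
  have "u (1/2) \<noteq> 0" unfolding u_def restrD_def by simp
  then have "u \<noteq> (\<lambda>z. 0)" by auto
  then have Nu: "N u > 0" using B uX by (metis less_eq_real_def)
  define F where "F = (\<lambda>n z. f z - restrD (poly (p n)) z)"
  define g where "g = (\<lambda>t::real. cis (- (real k * t)))"
  have gi: "set_integrable lborel {0..2*pi} g" unfolding g_def cis_conv_exp
    by (intro borel_integrable_atLeastAtMost' continuous_intros)
  have bound: "norm (c - coeff (p n) k) * N u \<le> N (F n)" for n
  proof -
    have "poly (p n) holomorphic_on UNIV" by (intro holomorphic_intros)
    then have "restrD (poly (p n)) \<in> X" using assms(3) unfolding contains_entire_def by blast
    moreover have sc: "\<forall>c. \<forall>f\<in>X. (\<lambda>z. c * f z) \<in> X" using B by blast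
    ultimately have neg: "(\<lambda>z. (-1) * restrD (poly (p n)) z) \<in> X"
      by blast
    have add: "\<forall>f\<in>X. \<forall>g\<in>X. (\<lambda>z. f z + g z) \<in> X" using B by blast
    have "(\<lambda>z. f z + (-1) * restrD (poly (p n)) z) \<in> X" using add[rule_format, OF assms(5) neg] by simp
    then have FX: "F n \<in> X" unfolding F_def by simp
    define G where "G = (\<lambda>w. f w - poly (p n) w)"
    have Ghol: "G holomorphic_on ball 0 1" unfolding G_def
      by (intro holomorphic_intros fhol)
    have dG: "(deriv ^^ k) G 0 / fact k = c - coeff (p n) k"
    proof -
      have "(deriv ^^ k) G 0 = (deriv ^^ k) f 0 - (deriv ^^ k) (poly (p n)) 0"
        unfolding G_def by (rule higher_deriv_diff[OF fhol _ open_ball]) (auto intro: holomorphic_intros)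
      then show ?thesis unfolding c_def poly_coeff_deriv[of "p n" k] by (simp add: diff_divide_distrib)
    qed
    define h where "h = restrD (\<lambda>z. (1 / (2*pi)) * (LINT t:{0..2*pi}|lborel. F n (z * cis t) * g t))"
    have hX: "h \<in> X" and hN: "N h \<le> (1 / (2*pi)) * (LINT t:{0..2*pi}|lborel. norm (g t)) * N (F n)"
      using assms(4) FX gi unfolding conv_bounded_def h_def Let_def by blast+
    have hN': "N h \<le> N (F n)" using hN unfolding g_def lint_norm_cis by simp
    have hnz: "h z = (c - coeff (p n) k) * u z" if z: "norm z < 1" "z \<noteq> 0" for z
    proof -
      have "(LINT t:{0..2*pi}|lborel. F n (z * cis t) * g t) = (LINT t:{0..2*pi}|lborel. G (z * cis t) * cis (- (real k * t)))"
        unfolding F_def G_def g_def restrD_def using z by (simp add: norm_mult)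
      also have "\<dots> = 2 * pi * (c - coeff (p n) k) * z ^ k"
        unfolding coef_lint[OF Ghol z] dG by simp
      finally show ?thesis using z unfolding h_def u_def restrD_def by simp
    qed
    have hcont: "isCont h 0"
    proof -
      have "h analytic_on ball 0 1" using B hX by blast
      then have "h holomorphic_on ball 0 1" by (rule analytic_imp_holomorphic)
      then have "continuous_on (ball 0 1) h" by (rule holomorphic_on_imp_continuous_on)
      then show ?thesis by (simp add: continuous_on_eq_continuous_at)
    qed
    have h0: "h 0 = (c - coeff (p n) k) * u 0"
    proof -
      have ev: "eventually (\<lambda>z. (c - coeff (p n) k) * z ^ k = h z) (at (0::complex))"
        unfolding eventually_at by (intro exI[of _ 1]) (auto simp: hnz u_def restrD_def)
      have l1: "(h \<longlongrightarrow> h 0) (at 0)" using hcont by (simp add: isCont_def)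
      have "((\<lambda>z. (c - coeff (p n) k) * z ^ k) \<longlongrightarrow> (c - coeff (p n) k) * 0 ^ k) (at 0)"
        by (intro tendsto_intros)
      then have l2: "(h \<longlongrightarrow> (c - coeff (p n) k) * 0 ^ k) (at 0)" using ev by (rule tendsto_cong[THEN iffD1, rotated])
      have "h 0 = (c - coeff (p n) k) * 0 ^ k" using tendsto_unique[OF _ l1 l2] by simp
      then show ?thesis by (simp add: u_def restrD_def)
    qed
    have hu: "h = (\<lambda>z. (c - coeff (p n) k) * u z)"
    proof
      fix z show "h z = (c - coeff (p n) k) * u z"
      proof (cases "z = 0")
        case True then show ?thesis using h0 by simp
      next
        case False
        show ?thesis
        proof (cases "norm z < 1")
          case True then show ?thesis using hnz False by blast
        next
          case F2: False then show ?thesis by (simp add: h_def u_def restrD_def)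
        qed
      qed
    qed
    have "N h = norm (c - coeff (p n) k) * N u" unfolding hu using B uX by blast
    then show ?thesis using hN' by simp
  qed
  have "(\<lambda>n. coeff (p n) k - c) \<longlonglongrightarrow> 0"
  proof (rule Lim_null_comparison)
    show "eventually (\<lambda>n. norm (coeff (p n) k - c) \<le> N (F n) / N u) sequentially"
      using bound Nu by (auto simp: pos_le_divide_eq norm_minus_commute)
    show "(\<lambda>n. N (F n) / N u) \<longlonglongrightarrow> 0"
      using tendsto_divide_zero[OF assms(8)] unfolding F_def by blast
  qed
  then have lim: "(\<lambda>n. coeff (p n) k) \<longlonglongrightarrow> c" by (rule LIM_zero_cancel)
  have "Re c \<in> \<int>"
    by (rule closed_sequentially[OF closed_Ints _ tendsto_Re[OF lim]])
       (use assms(7) in \<open>auto simp: gauss_int_def\<close>)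
  moreover have "Im c \<in> \<int>"
    by (rule closed_sequentially[OF closed_Ints _ tendsto_Im[OF lim]])
       (use assms(7) in \<open>auto simp: gauss_int_def\<close>)
  ultimately show "gauss_int ((deriv ^^ k) f 0 / fact k)" unfolding c_def gauss_int_def by simp
qed

end
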